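(* Let $N$ be a positive integer (the input size) and let $M = N^{O(1)}$ be a positive integer (the input range). Then there exists a one-layer transformer with a single head of sum-of-determinants $2$-simplicial attention (defined in the context) with attention head dimension $d = 7$ such that for every input $X = (x_1,\dots,x_N) \in [M]^N$ and every $i \in \{1,\dots,N\}$, the transformer's output at position $i$ equals $1$ if there exist $j_1, j_2 \in \{1,\dots,N\}$ with $x_i + x_{j_1} + x_{j_2} \equiv 0 \pmod M$, and equals $0$ otherwise.
   Context: $[M]=\{0,1,\dots,M-1\}$ (residues mod $M$). The transformer model class: each input element $x_j$ is mapped by an input MLP $\phi$ to an embedding $\phi(x_j)$; linear maps $Q, K, K'$ produce the query ${\bm q}_i = Q\phi(x_i)\in\mathbb{R}^d$ and keys ${\bm k}_{j} = K\phi(x_{j})$, ${\bm k}'_{j} = K'\phi(x_{j})$, and linear maps $V, V'$ produce values ${\bm v}_j = V\phi(x_j)$, ${\bm v}'_j = V'\phi(x_j)$. For a vector ${\bm u}$, write ${\bm u}^{(l)}$ for its $l$-th consecutive block of $3$ coordinates (coordinates $3(l-1)+1,\dots,3l$). The attention logit for query position $i$ and key pair $(j_1,j_2)$ is the sum-of-determinants trilinear form $A_{i j_1 j_2} = \sum_{l} \det\big([{\bm q}_i^{(l)}, {\bm k}_{j_1}^{(l)}, {{\bm k}'_{j_2}}^{(l)}]\big)$ over the complete $3$-coordinate blocks (for $d=7$, blocks $l=1,2$), where $[\cdot,\cdot,\cdot]$ stacks the three $3$-vectors into a $3\times 3$ matrix. Attention weights are the softmax of the logits over all pairs $(j_1,j_2)$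 (and, as in the standard Match-type constructions, over an additional designated "blank" pair whose logit is ${\bm q}_i\cdot{\bm k}_{\mathrm{blank}}$ for a fixed key vector ${\bm k}_{\mathrm{blank}}\in\mathbb{R}^d$ and whose value is a fixed vector), and the attention output at position $i$ is $\sum_{j_1,j_2} S_{i j_1 j_2}\,({\bm v}_{j_1}\circ {\bm v}'_{j_2})$ plus the blank pair's weighted value, where $\circ$ is the elementwise product. The final output at position $i$ is an output MLP $\psi$ applied to the attention output. *)

theory Defs
  imports Complex_Main
begin

text \<open>Vectors are represented as functions nat => real, with coordinates 0..dim-1
  (coordinates outside the dimension are 0). Matrices are nat => nat => real.\<close>

definition lin :: "nat \<Rightarrow> nat \<Rightarrow> (nat \<Rightarrow> nat \<Rightarrow> real) \<Rightarrow> (nat \<Rightarrow> real) \<Rightarrow> (nat \<Rightarrow> real)" where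
  "lin d e W u = (\<lambda>r. if r < d then (\<Sum>c<e. W r c * u c) else 0)"

definition det3 :: "(nat \<Rightarrow> real) \<Rightarrow> (nat \<Rightarrow> real) \<Rightarrow> (nat \<Rightarrow> real) \<Rightarrow> real" where
  "det3 a b c =
     a 0 * (b 1 * c 2 - b 2 * c 1)
   - b 0 * (a 1 * c 2 - a 2 * c 1)
   + c 0 * (a 1 * b 2 - a 2 * b 1)"

definition blk :: "(nat \<Rightarrow> real) \<Rightarrow> nat \<Rightarrow> (nat \<Rightarrow> real)" where
  "blk u l = (\<lambda>r. u (3 * l + r))"

definition sod_logit :: "nat \<Rightarrow> (nat \<Rightarrow> real) \<Rightarrow> (nat \<Rightarrow> real) \<Rightarrow> (nat \<Rightarrow> real) \<Rightarrow> real" where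
  "sod_logit d q k k' = (\<Sum>l < d div 3. det3 (blk q l) (blk k l) (blk k' l))"

text \<open>Input positions 1..N, input X.\<close>
definition tf_out ::
  "nat \<Rightarrow> nat \<Rightarrow> (nat \<Rightarrow> nat \<Rightarrow> real)
   \<Rightarrow> (nat \<Rightarrow> nat \<Rightarrow> real) \<Rightarrow> (nat \<Rightarrow> nat \<Rightarrow> real) \<Rightarrow> (nat \<Rightarrow> nat \<Rightarrow> real)
   \<Rightarrow> (nat \<Rightarrow> nat \<Rightarrow> real) \<Rightarrow> (nat \<Rightarrow> nat \<Rightarrow> real)
   \<Rightarrow> (nat \<Rightarrow> real) \<Rightarrow> (nat \<Rightarrow> real) \<Rightarrow> ((nat \<Rightarrow> real) \<Rightarrow> real)
   \<Rightarrow> nat \<Rightarrow> (nat \<Rightarrow> nat) \<Rightarrow> nat \<Rightarrow> real" where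
  "tf_out d e \<phi> Q K K' V V' kb vb \<psi> N X i =
     (let q = lin d e Q (\<phi> (X i));
          k = (\<lambda>j. lin d e K (\<phi> (X j)));
          k' = (\<lambda>j. lin d e K' (\<phi> (X j)));
          v = (\<lambda>j. lin d e V (\<phi> (X j)));
          v' = (\<lambda>j. lin d e V' (\<phi> (X j)));
          w = (\<lambda>j1 j2. exp (sod_logit d q (k j1) (k' j2)));
          wb = exp (\<Sum>r<d. q r * kb r);
          Z = wb + (\<Sum>j1\<in>{1..N}. \<Sum>j2\<in>{1..N}. w j1 j2);
          out = (\<lambda>r. if r < d then
                   (wb * vb r + (\<Sum>j1\<in>{1..N}. \<Sum>j2\<in>{1..N}. w j1 j2 * (v j1 r * v' j2 r))) / Z
                 else 0)
      in \<psi> out)"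

end

theory Submission
  imports Defs
begin

definition qv :: "real \<Rightarrow> real \<Rightarrow> nat \<Rightarrow> real" where
  "qv m t r = (if r = 0 then m * cos t else if r = 3 then - m * sin t else if r = 6 then 1 else 0)"
definition kv :: "real \<Rightarrow> nat \<Rightarrow> real" where
  "kv t r = (if r = 1 \<or> r = 4 then cos t else if r = 2 \<or> r = 5 then sin t else 0)"
definition kw :: "real \<Rightarrow> nat \<Rightarrow> real" where
  "kw t r = (if r = 1 then sin t else if r = 2 then cos t else if r = 4 then - cos t else if r = 5 then sin t else 0)"

definition phiv :: "real \<Rightarrow> real \<Rightarrow> nat \<Rightarrow> real" where
  "phiv m t c = (if c < 7 then qv m t c else if c < 14 then kv t (c - 7) else if c < 21 then kw t (c - 14)
     else if c = 21 then 1 else 0)"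

lemma lin_sel:
  assumes "\<And>r. r < d \<Longrightarrow> s r < e"
  shows "lin d e (\<lambda>r c. if c = s r then 1 else 0) u = (\<lambda>r. if r < d then u (s r) else 0)"
proof -
  have "(\<Sum>c<e. (if c = s r then 1 else 0) * u c) = u (s r)" if "r < d" for r
  proof -
    have "(\<Sum>c<e. (if c = s r then 1 else 0) * u c) = (\<Sum>c<e. if c = s r then u c else 0)"
      by (rule sum.cong) auto
    also have "\<dots> = u (s r)" using assms[OF that] by (simp add: sum.delta)
    finally show ?thesis .
  qed
  then show ?thesis by (auto simp: lin_def fun_eq_iff)
qed

lemma logit:
  "sod_logit 7 (\<lambda>r. if r < 7 then qv m a r else 0) (\<lambda>r. if r < 7 then kv b r else 0)
     (\<lambda>r. if r < 7 then kw c r else 0) = m * cos (a + b + c)"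
proof -
  have "sod_logit 7 (\<lambda>r. if r < 7 then qv m a r else 0) (\<lambda>r. if r < 7 then kv b r else 0)
     (\<lambda>r. if r < 7 then kw c r else 0) = m * cos a * (cos b * cos c - sin b * sin c)
      - m * sin a * (cos b * sin c + sin b * cos c)"
    by (simp add: sod_logit_def det3_def blk_def qv_def kv_def kw_def numeral_2_eq_2 lessThan_Suc algebra_simps)
  also have "\<dots> = m * cos (a + (b + c))"
    by (simp add: cos_add sin_add algebra_simps)
  finally show ?thesis by (simp add: add.assoc)
qed


lemma cos_lt1:
  assumes "M \<ge> (1::nat)" "\<not> M dvd s"
  shows "cos (2 * pi * real s / real M) < 1"
proof -
  have "cos (2 * pi * real s / real M) \<noteq> 1"
  proof
    assume "cos (2 * pi * real s / real M) = 1"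
    then obtain n :: int where n: "2 * pi * real s / real M = real_of_int n * 2 * pi"
      using cos_one_2pi_int by metis
    have "real s = real_of_int n * real M" using n assms(1) pi_gt_zero
      by (simp add: field_simps)
    then have "int s = n * int M" by (metis of_int_eq_iff of_int_mult of_int_of_nat_eq)
    then have "int M dvd int s" by simp
    then show False using assms(2) by simp
  qed
  then show ?thesis using cos_le_one[of "2 * pi * real s / real M"] by linarith
qed

lemma cos_eq1:
  assumes "M \<ge> (1::nat)" "M dvd s"
  shows "cos (2 * pi * real s / real M) = 1"
proof -
  obtain k where "s = M * k" using assms(2) by blast
  then have "2 * pi * real s / real M = real k * 2 * pi" using assms(1) by simp
  then show ?thesis using cos_one_2pi by blast
qed


theorem theorem1:
  fixes N M c :: nat
  assumes "N \<ge> 1" and "M \<ge> 1" and "M \<le> N ^ c"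
  shows "\<exists>(e::nat) (\<phi>::nat \<Rightarrow> nat \<Rightarrow> real) Q K K' V V' kb vb \<psi>.
           \<forall>X::nat \<Rightarrow> nat. (\<forall>j\<in>{1..N}. X j < M) \<longrightarrow>
             (\<forall>i\<in>{1..N}. tf_out 7 e \<phi> Q K K' V V' kb vb \<psi> N X i =
                (if \<exists>j1\<in>{1..N}. \<exists>j2\<in>{1..N}. (X i + X j1 + X j2) mod M = 0 then 1 else 0))"
proof -
  define \<theta> where "\<theta> = (\<lambda>x::nat. 2 * pi * real x / real M)"
  define B where "B = (\<lambda>s. cos (2 * pi * real s / real M)) ` {s. s < 3 * M \<and> \<not> M dvd s}"
  define \<delta> where "\<delta> = Max (insert 0 B)"
  define \<mu> where "\<mu> = (ln (2 * real N ^ 2) + 1) / (1 - \<delta>)"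
  have finB: "finite B" unfolding B_def by simp
  have Blt: "b < 1" if "b \<in> B" for b using that cos_lt1[OF assms(2)] unfolding B_def by blast
  have \<delta>lt: "\<delta> < 1" unfolding \<delta>_def using finB Blt by (subst Max_less_iff) auto
  have \<delta>ge: "b \<le> \<delta>" if "b \<in> B" for b unfolding \<delta>_def using finB that by simp
  have \<mu>eq: "\<mu> - \<mu> * \<delta> = ln (2 * real N ^ 2) + 1"
  proof -
    have "\<mu> - \<mu> * \<delta> = \<mu> * (1 - \<delta>)" by (simp add: algebra_simps)
    also have "\<dots> = ln (2 * real N ^ 2) + 1" using \<delta>lt unfolding \<mu>_def by simp
    finally show ?thesis .
  qed
  have Npos: "real N ^ 2 > 0" using assms(1) by simp
  have \<mu>pos: "\<mu> > 0"
  proof -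
    have "real N ^ 2 \<ge> 1" using assms(1) by (simp add: one_le_power)
    then have "ln (2 * real N ^ 2) \<ge> 0" by simp
    then show ?thesis using \<delta>lt unfolding \<mu>_def by (intro divide_pos_pos) auto
  qed
  have keyineq: "real N * real N * exp (\<mu> * \<delta>) < exp (\<mu> - ln 2)"
  proof -
    have "exp \<mu> = exp (\<mu> * \<delta>) * exp (ln (2 * real N ^ 2) + 1)"
      using \<mu>eq by (metis add_diff_cancel_left' diff_add_cancel exp_add)
    also have "\<dots> = exp (\<mu> * \<delta>) * (2 * real N ^ 2) * exp 1"
      using Npos by (simp add: exp_add)
    finally have "exp \<mu> = exp (\<mu> * \<delta>) * (2 * real N ^ 2) * exp 1" .
    moreover have "exp (\<mu> - ln 2) = exp \<mu> / 2" by (simp add: exp_diff)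
    ultimately have E: "exp (\<mu> - ln 2) = (real N * real N * exp (\<mu> * \<delta>)) * exp 1"
      by (simp add: power2_eq_square mult_ac)
    have "(real N * real N * exp (\<mu> * \<delta>)) * 1 < (real N * real N * exp (\<mu> * \<delta>)) * exp 1"
      using Npos by (intro mult_strict_left_mono) (auto simp: power2_eq_square)
    then show ?thesis using E by simp
  qed
  define \<phi> where "\<phi> = (\<lambda>x. phiv \<mu> (\<theta> x))"
  define Q where "Q = (\<lambda>r c::nat. if c = r then 1 else (0::real))"
  define K where "K = (\<lambda>r c::nat. if c = r + 7 then 1 else (0::real))"
  define K' where "K' = (\<lambda>r c::nat. if c = r + 14 then 1 else (0::real))"
  define V where "V = (\<lambda>(r::nat) (c::nat). if c = (if r = 0 then 21 else 22) then 1 else (0::real))"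
  define kb where "kb = (\<lambda>r::nat. if r = 6 then \<mu> - ln 2 else 0)"
  define vb where "vb = (\<lambda>r::nat. 0::real)"
  define \<psi> where "\<psi> = (\<lambda>ov::nat \<Rightarrow> real. if ov 0 > 1/2 then 1 else (0::real))"
  have LQ: "lin 7 23 Q (\<phi> x) = (\<lambda>r. if r < 7 then qv \<mu> (\<theta> x) r else 0)" for x
    unfolding Q_def by (subst lin_sel[where s = "\<lambda>r. r"]) (auto simp: \<phi>_def phiv_def fun_eq_iff)
  have LK: "lin 7 23 K (\<phi> x) = (\<lambda>r. if r < 7 then kv (\<theta> x) r else 0)" for x
    unfolding K_def by (subst lin_sel[where s = "\<lambda>r. r + 7"]) (auto simp: \<phi>_def phiv_def fun_eq_iff)
  have LK': "lin 7 23 K' (\<phi> x) = (\<lambda>r. if r < 7 then kw (\<theta> x) r else 0)" for x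
    unfolding K'_def by (subst lin_sel[where s = "\<lambda>r. r + 14"]) (auto simp: \<phi>_def phiv_def fun_eq_iff)
  have LV: "lin 7 23 V (\<phi> x) = (\<lambda>r. if r = 0 then 1 else 0)" for x
    unfolding V_def by (subst lin_sel[where s = "\<lambda>r. if r = 0 then 21 else 22"]) (auto simp: \<phi>_def phiv_def fun_eq_iff)
  have blank: "(\<Sum>r<7. qv \<mu> t r * kb r) = \<mu> - ln 2" for t
  proof -
    have "(\<Sum>r<7. qv \<mu> t r * kb r) = (\<Sum>r<(7::nat). if r = 6 then \<mu> - ln 2 else 0)"
      by (rule sum.cong) (auto simp: kb_def qv_def)
    also have "\<dots> = \<mu> - ln 2" by (simp add: sum.delta)
    finally show ?thesis .
  qed
  show ?thesis
  proof (intro exI allI impI ballI)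
    fix X :: "nat \<Rightarrow> nat" and i
    assume XM: "\<forall>j\<in>{1..N}. X j < M" and i: "i \<in> {1..N}"
    define w where "w = (\<lambda>j1 j2. exp (\<mu> * cos (\<theta> (X i) + \<theta> (X j1) + \<theta> (X j2))))"
    define S where "S = (\<Sum>j1\<in>{1..N}. \<Sum>j2\<in>{1..N}. w j1 j2)"
    define wb where "wb = exp (\<mu> - ln 2)"
    have bl: "(\<Sum>r<7. (if r < 7 then qv \<mu> t r else 0) * kb r) = \<mu> - ln 2" for t
      by (rule trans[OF sum.cong[OF refl] blank[of t]]) simp
    have tf: "tf_out 7 23 \<phi> Q K K' V V kb vb \<psi> N X i = (if S / (wb + S) > 1/2 then 1 else 0)"
      by (simp add: tf_out_def Let_def LQ LK LK' LV logit bl blank \<psi>_def vb_def S_def w_def wb_def)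
    show "tf_out 7 23 \<phi> Q K K' V V kb vb \<psi> N X i =
         (if \<exists>j1\<in>{1..N}. \<exists>j2\<in>{1..N}. (X i + X j1 + X j2) mod M = 0 then 1 else 0)"
    proof -
      have wpos: "w j1 j2 > 0" for j1 j2 unfolding w_def by simp
      have Sge: "S \<ge> 0" unfolding S_def using wpos by (intro sum_nonneg) (auto intro: less_imp_le)
      have wbpos: "wb > 0" unfolding wb_def by simp
      have iff: "(S / (wb + S) > 1/2) \<longleftrightarrow> S > wb" using Sge wbpos by (simp add: field_simps)
      have th: "\<theta> (X i) + \<theta> (X j1) + \<theta> (X j2) = 2 * pi * real (X i + X j1 + X j2) / real M" for j1 j2
        unfolding \<theta>_def by (simp add: add_divide_distrib distrib_left)
      show ?thesis
      proof (cases "\<exists>j1\<in>{1..N}. \<exists>j2\<in>{1..N}. (X i + X j1 + X j2) mod M = 0")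
        case True
        then obtain j1 j2 where j: "j1 \<in> {1..N}" "j2 \<in> {1..N}" "(X i + X j1 + X j2) mod M = 0" by auto
        have dv: "M dvd (X i + X j1 + X j2)" using j(3) by (simp add: mod_eq_0_iff_dvd)
        have "w j1 j2 = exp \<mu>" unfolding w_def th using cos_eq1[OF assms(2) dv] by simp
        moreover have "w j1 j2 \<le> (\<Sum>j2\<in>{1..N}. w j1 j2)"
          using j(2) wpos by (intro member_le_sum) (auto intro: less_imp_le)
        moreover have "(\<Sum>j2\<in>{1..N}. w j1 j2) \<le> S"
          unfolding S_def using j(1) wpos by (intro member_le_sum sum_nonneg) (auto intro: less_imp_le)
        moreover have "exp (\<mu> - ln 2) < exp \<mu>" by simp
        ultimately have "S > wb" unfolding wb_def by linarith
        then show ?thesis using True tf iff by simp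
      next
        case False
        have wle: "w j1 j2 \<le> exp (\<mu> * \<delta>)" if j: "j1 \<in> {1..N}" "j2 \<in> {1..N}" for j1 j2
        proof -
          have "X i < M" "X j1 < M" "X j2 < M" using XM i j by auto
          then have "X i + X j1 + X j2 < 3 * M" by linarith
          moreover have "\<not> M dvd (X i + X j1 + X j2)" using False j by (auto simp: mod_eq_0_iff_dvd)
          ultimately have "cos (2 * pi * real (X i + X j1 + X j2) / real M) \<in> B"
            unfolding B_def by blast
          then have "cos (2 * pi * real (X i + X j1 + X j2) / real M) \<le> \<delta>" by (rule \<delta>ge)
          then have "\<mu> * cos (2 * pi * real (X i + X j1 + X j2) / real M) \<le> \<mu> * \<delta>"
            using \<mu>pos by (intro mult_left_mono) auto
          then show ?thesis unfolding w_def th by simp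
        qed
        have "(\<Sum>j2\<in>{1..N}. w j1 j2) \<le> real N * exp (\<mu> * \<delta>)" if "j1 \<in> {1..N}" for j1
          using sum_bounded_above[of "{1..N}" "w j1" "exp (\<mu> * \<delta>)"] wle that by simp
        then have "S \<le> real N * (real N * exp (\<mu> * \<delta>))"
          unfolding S_def using sum_bounded_above[of "{1..N}" _ "real N * exp (\<mu> * \<delta>)"] by simp
        then have "\<not> S > wb" using keyineq unfolding wb_def by (simp add: mult_ac)
        then show ?thesis using False tf iff by simp
      qed
    qed
  qed
qed

end
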